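(* Let $G$ be a Gauss diagram with an over-bridge or under-bridge $v_0,v_1,\dots,v_{k+1}$ ($k\ge1$), and let $G'$ be the Gauss diagram obtained from $G$ by removing every chord having one of $v_1,\dots,v_k$ as an endpoint. Then $g(G)>g(G')$ if and only if there is a cycle of $G$ which, for some $0\le i\ne j\le k$, passes along the circle both from $v_i$ to $v_{i+1}$ and from $v_j$ to $v_{j+1}$.
   Context: A Gauss diagram is an oriented circle together with $n$ signed, oriented chords, each connecting two distinct points of the circle, all $2n$ endpoints being distinct. An over-bridge (resp. under-bridge) of length $k$ of a Gauss diagram is a sequence $v_0,\dots,v_{k+1}$ of consecutive chord endpoints along the oriented circle such that $v_1,\dots,v_k$ are all initial (resp. all terminal) points of their chords. The canonical surface $\Sigma_G$ is obtained from the annulus $S^1\times[0,1]$ by attaching, for each chord, a band to small neighborhoods of its two endpoints in $S^1\times\{0\}$ so that the result is oriented, and then capping every boundary component except $S^1\times\{1\}$ with a disk; $g(G)$ is the genus of $\Sigma_G$. A cycle in $G$ is obtained by starting at an endpoint $x$ of a chord and repeating: (i) move along the current chord to its other endpoint, (ii) move along the circle (in its orientation) to the next chord endpoint $y$, and continue from $y$, until returning to $x$ in step (ii). One has $g(G)=(n-s_G+1)/2$, $s_G$ the number of cycles ($s_G=1$ if there are no chords). *)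

theory Defs
  imports Complex_Main
begin

text \<open>A Gauss diagram is encoded by a finite set P of chord endpoints (natural numbers),
  placed on the oriented circle in increasing order (cyclically), a fixed-point-free
  involution m on P pairing the two endpoints of each chord, and a predicate ini
  marking the initial endpoint of each chord (exactly one per chord).
  Signs of chords play no role in the statement and are omitted.\<close>

definition gauss :: "nat set \<Rightarrow> (nat \<Rightarrow> nat) \<Rightarrow> (nat \<Rightarrow> bool) \<Rightarrow> bool" where
  "gauss P m ini \<longleftrightarrow> finite P \<and>
     (\<forall>p\<in>P. m p \<in> P \<and> m p \<noteq> p \<and> m (m p) = p \<and> (ini p \<longleftrightarrow> \<not> ini (m p)))"

definition nxt :: "nat set \<Rightarrow> nat \<Rightarrow> nat" where
  "nxt P p = (if {q\<in>P. p < q} = {} then Min P else Min {q\<in>P. p < q})"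

definition cstep :: "nat set \<Rightarrow> (nat \<Rightarrow> nat) \<Rightarrow> nat \<Rightarrow> nat" where
  "cstep P m x = nxt P (m x)"

text \<open>A cycle is recorded as the set of endpoints from which iterations start.\<close>
definition cycles :: "nat set \<Rightarrow> (nat \<Rightarrow> nat) \<Rightarrow> nat set set" where
  "cycles P m = {{(cstep P m ^^ i) x | i. True} | x. x \<in> P}"

definition num_cycles :: "nat set \<Rightarrow> (nat \<Rightarrow> nat) \<Rightarrow> nat" where
  "num_cycles P m = (if P = {} then 1 else card (cycles P m))"

text \<open>g(G) = (n - s_G + 1)/2 with n = number of chords = |P|/2.\<close>
definition genus :: "nat set \<Rightarrow> (nat \<Rightarrow> nat) \<Rightarrow> real" where
  "genus P m = (real (card P) / 2 - real (num_cycles P m) + 1) / 2"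

text \<open>Cycle C passes along the circle from endpoint p to the next endpoint nxt P p:
  this happens in step (ii) exactly when the chord move of some iteration lands at p.\<close>
definition passes :: "(nat \<Rightarrow> nat) \<Rightarrow> nat set \<Rightarrow> nat \<Rightarrow> bool" where
  "passes m C p \<longleftrightarrow> (\<exists>x\<in>C. m x = p)"

end

theory Submission
  imports Defs
begin

definition orb :: "('a \<Rightarrow> 'a) \<Rightarrow> 'a \<Rightarrow> 'a set" where
  "orb f x = {(f ^^ i) x | i. True}"

definition orbs :: "('a \<Rightarrow> 'a) \<Rightarrow> 'a set \<Rightarrow> 'a set set" where
  "orbs f P = {orb f x | x. x \<in> P}"

definition sw :: "'a \<Rightarrow> 'a \<Rightarrow> 'a \<Rightarrow> 'a" where
  "sw a b x = (if x = a then b else if x = b then a else x)"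

lemma funpow_in: "f ` P \<subseteq> P \<Longrightarrow> x \<in> P \<Longrightarrow> (f ^^ i) x \<in> P"
  by (induction i) auto

lemma orb_sub: "bij_betw f P P \<Longrightarrow> x \<in> P \<Longrightarrow> orb f x \<subseteq> P"
  unfolding orb_def using funpow_in[of f P x] bij_betw_imp_surj_on by blast

lemma self_in_orb: "x \<in> orb f x"
  unfolding orb_def by (auto intro: exI[of _ 0])

lemma iter_in_orb: "(f ^^ i) x \<in> orb f x"
  unfolding orb_def by auto

lemma app_in_orb: "f x \<in> orb f x"
  using iter_in_orb[where i=1 and f=f and x=x] by simp

lemma orb_trans: "y \<in> orb f x \<Longrightarrow> z \<in> orb f y \<Longrightarrow> z \<in> orb f x"
proof -
  assume "y \<in> orb f x" "z \<in> orb f y"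
  then obtain i j where "y = (f ^^ i) x" "z = (f ^^ j) y" unfolding orb_def by blast
  then have "z = (f ^^ (j + i)) x" by (simp add: funpow_add)
  then show ?thesis unfolding orb_def by blast
qed

lemma orb_app: "y \<in> orb f x \<Longrightarrow> f y \<in> orb f x"
  using orb_trans app_in_orb by metis

lemma period_aux:
  assumes "bij_betw f P P" "x \<in> P" "i < j" "(f ^^ i) x = (f ^^ j) x"
  shows "\<exists>n>0. (f ^^ n) x = x"
proof -
  have e: "(f ^^ j) x = (f ^^ i) ((f ^^ (j - i)) x)"
  proof -
    have "j = i + (j - i)" using assms(3) by simp
    then have "(f ^^ j) x = (f ^^ (i + (j - i))) x" by simp
    then show ?thesis by (simp only: funpow_add comp_apply)
  qed
  have inj: "inj_on (f ^^ i) P" using bij_betw_funpow[OF assms(1)] bij_betw_def by blast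
  have inP: "(f ^^ (j - i)) x \<in> P"
    using funpow_in[of f P x] assms bij_betw_imp_surj_on by blast
  have "(f ^^ i) ((f ^^ (j - i)) x) = (f ^^ i) x" using e assms(4) by simp
  then have "(f ^^ (j - i)) x = x" using inj_onD[OF inj _ inP assms(2)] by simp
  then show ?thesis using assms(3) by (intro exI[of _ "j - i"]) simp
qed

lemma period:
  assumes "finite P" "bij_betw f P P" "x \<in> P"
  shows "\<exists>n>0. (f ^^ n) x = x"
proof -
  have "\<not> inj_on (\<lambda>i. (f ^^ i) x) {0..card P}"
  proof
    assume inj: "inj_on (\<lambda>i. (f ^^ i) x) {0..card P}"
    have "(\<lambda>i. (f ^^ i) x) ` {0..card P} \<subseteq> P"
      using funpow_in[of f P x] assms bij_betw_imp_surj_on by blast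
    then have "card ((\<lambda>i. (f ^^ i) x) ` {0..card P}) \<le> card P"
      using assms(1) card_mono by blast
    moreover have "card ((\<lambda>i. (f ^^ i) x) ` {0..card P}) = Suc (card P)"
      using card_image[OF inj] by simp
    ultimately show False by simp
  qed
  then obtain i j where ij: "i \<noteq> j" "(f ^^ i) x = (f ^^ j) x"
    unfolding inj_on_def by blast
  show ?thesis
  proof (cases "i < j")
    case True then show ?thesis using period_aux[OF assms(2,3)] ij by blast
  next
    case False then have "j < i" using ij by auto
    then show ?thesis using period_aux[OF assms(2,3) \<open>j < i\<close>] ij by simp
  qed
qed

lemma funpow_period_mult: "(f ^^ n) x = x \<Longrightarrow> (f ^^ (n * t)) x = x"
proof (induction t)
  case 0 then show ?case by simp
next
  case (Suc t)
  have "(f ^^ (n * Suc t)) x = (f ^^ n) ((f ^^ (n * t)) x)"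
    by (simp add: funpow_add[unfolded comp_def] mult.commute)
  then show ?case using Suc by simp
qed

lemma funpow_period_mod: "(f ^^ n) x = x \<Longrightarrow> (f ^^ t) x = (f ^^ (t mod n)) x"
proof -
  assume h: "(f ^^ n) x = x"
  have "(f ^^ t) x = (f ^^ (t mod n + n * (t div n))) x" by simp
  also have "\<dots> = (f ^^ (t mod n)) ((f ^^ (n * (t div n))) x)"
    by (simp only: funpow_add comp_apply)
  also have "\<dots> = (f ^^ (t mod n)) x" using funpow_period_mult[OF h] by simp
  finally show ?thesis .
qed

lemma orb_sym:
  assumes "finite P" "bij_betw f P P" "x \<in> P" "y \<in> orb f x"
  shows "x \<in> orb f y"
proof -
  obtain n where n: "n > 0" "(f ^^ n) x = x" using period[OF assms(1-3)] by blast
  obtain i where i: "y = (f ^^ i) x" using assms(4) unfolding orb_def by blast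
  have le: "n * i \<ge> i" using n by simp
  have e1: "(f ^^ (n * i - i)) y = (f ^^ (n * i - i + i)) x"
    unfolding i by (simp only: funpow_add comp_apply)
  have e2: "n * i - i + i = n * i" using le by simp
  have e3: "(f ^^ (n * i)) x = x" using funpow_period_mult[OF n(2)] .
  have "(f ^^ (n * i - i)) y = x" using e1 e2 e3 by simp
  then show ?thesis using iter_in_orb[where f=f and i="n * i - i" and x=y] by simp
qed

lemma orb_eq:
  assumes "finite P" "bij_betw f P P" "x \<in> P" "y \<in> orb f x"
  shows "orb f y = orb f x"
proof
  show "orb f y \<subseteq> orb f x"
  proof
    fix z assume "z \<in> orb f y" then show "z \<in> orb f x" using orb_trans[OF assms(4)] by simp
  qed
  show "orb f x \<subseteq> orb f y"
  proof
    fix z assume "z \<in> orb f x" then show "z \<in> orb f y" using orb_trans[OF orb_sym[OF assms]] by simp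
  qed
qed

lemma orb_least:
  assumes "y \<in> orb f x"
  shows "\<exists>i. (f ^^ i) x = y \<and> (\<forall>j<i. (f ^^ j) x \<noteq> y)"
proof -
  have "\<exists>i. (f ^^ i) x = y" using assms unfolding orb_def by auto
  then show ?thesis using exists_least_iff[of "\<lambda>i. (f ^^ i) x = y"] by blast
qed

lemma orb_periodic:
  assumes "n > 0" "(f ^^ n) x = x"
  shows "orb f x = {(f ^^ t) x | t. t < n}"
proof
  show "orb f x \<subseteq> {(f ^^ t) x | t. t < n}"
  proof
    fix y assume "y \<in> orb f x"
    then obtain t where "y = (f ^^ t) x" unfolding orb_def by blast
    then have "y = (f ^^ (t mod n)) x" using funpow_period_mod[OF assms(2)] by simp
    moreover have "t mod n < n" using assms(1) by simp
    ultimately show "y \<in> {(f ^^ t) x | t. t < n}" by blast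
  qed
qed (auto simp: orb_def)


lemma sw_bij: "a \<in> P \<Longrightarrow> b \<in> P \<Longrightarrow> bij_betw (sw a b) P P"
  by (rule bij_betw_byWitness[where f'="sw a b"]) (auto simp: sw_def)

lemma bij_comp_sw:
  "bij_betw f P P \<Longrightarrow> a \<in> P \<Longrightarrow> b \<in> P \<Longrightarrow> bij_betw (\<lambda>x. f (sw a b x)) P P"
  using bij_betw_trans[OF sw_bij[of a P b], of f P] by (simp add: comp_def)

lemma agree:
  assumes "\<forall>j<i. (f ^^ j) x \<notin> {a, b}"
  shows "((\<lambda>x. f (sw a b x)) ^^ i) x = (f ^^ i) x"
  using assms
proof (induction i)
  case 0 then show ?case by simp
next
  case (Suc i)
  then have "((\<lambda>x. f (sw a b x)) ^^ i) x = (f ^^ i) x" by simp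
  moreover have "(f ^^ i) x \<notin> {a, b}" using Suc.prems by simp
  ultimately show ?case by (simp add: sw_def)
qed

lemma agree_orb:
  assumes "\<forall>j. (f ^^ j) x \<notin> {a, b}"
  shows "orb (\<lambda>x. f (sw a b x)) x = orb f x"
  unfolding orb_def using agree[of _ f x a b] assms by auto

lemma inv_orb:
  assumes "f ` S \<subseteq> S" "a \<in> S" "b \<in> S" "x \<in> S"
  shows "orb (\<lambda>x. f (sw a b x)) x \<subseteq> S"
proof -
  have "(\<lambda>x. f (sw a b x)) ` S \<subseteq> S" using assms by (auto simp: sw_def)
  then show ?thesis unfolding orb_def using funpow_in[of _ S x] assms(4) by blast
qed

lemma path_avoid:
  assumes "finite P" "bij_betw f P P" "x \<in> P" "b \<in> orb f x" "a \<notin> orb f x"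
  shows "b \<in> orb (\<lambda>x. f (sw a b x)) x"
proof -
  obtain i where i: "(f ^^ i) x = b" "\<forall>j<i. (f ^^ j) x \<noteq> b" using orb_least[OF assms(4)] by blast
  have "\<forall>j<i. (f ^^ j) x \<notin> {a, b}" using i(2) assms(5) iter_in_orb[where f=f and x=x] by blast
  then have "((\<lambda>x. f (sw a b x)) ^^ i) x = b" using agree i(1) by metis
  then show ?thesis using iter_in_orb by metis
qed

lemma sw_sym: "sw a b = sw b a"
  by (auto simp: sw_def fun_eq_iff)

lemma merge:
  assumes fin: "finite P" and bij: "bij_betw f P P" and aP: "a \<in> P" and bP: "b \<in> P"
    and ab: "a \<noteq> b" and nb: "b \<notin> orb f a"
  defines "g \<equiv> (\<lambda>x. f (sw a b x))" and "U \<equiv> orb f a \<union> orb f b"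
  shows "card (orbs g P) + 1 = card (orbs f P)"
    "\<forall>x\<in>U. orb g x = U" "\<forall>x\<in>P - U. orb g x = orb f x"
proof -
  have bijg: "bij_betw g P P" unfolding g_def using bij_comp_sw[OF bij aP bP] .
  have na: "a \<notin> orb f b"
  proof
    assume "a \<in> orb f b"
    then have "orb f a = orb f b" using orb_eq[OF fin bij bP] by simp
    then show False using nb self_in_orb[of b f] by simp
  qed
  have oaP: "orb f a \<subseteq> P" using orb_sub[OF bij aP] .
  have obP: "orb f b \<subseteq> P" using orb_sub[OF bij bP] .
  have gsym: "g = (\<lambda>x. f (sw b a x))"
  proof -
    have "sw a b = sw b a" by (rule sw_sym)
    then show ?thesis unfolding g_def by (rule arg_cong[where f="\<lambda>h. (\<lambda>x. f (h x))"])
  qed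
  have rb: "b \<in> orb g x" if "x \<in> orb f b" for x
  proof -
    have xP: "x \<in> P" using that obP by blast
    have "orb f x = orb f b" using orb_eq[OF fin bij bP that] .
    then have "b \<in> orb f x" "a \<notin> orb f x" using self_in_orb[of b f] na by simp_all
    then show ?thesis unfolding g_def using path_avoid[OF fin bij xP] by simp
  qed
  have ra: "a \<in> orb g x" if "x \<in> orb f a" for x
  proof -
    have xP: "x \<in> P" using that oaP by blast
    have "orb f x = orb f a" using orb_eq[OF fin bij aP that] .
    then have "a \<in> orb f x" "b \<notin> orb f x" using self_in_orb[of a f] nb by simp_all
    then show ?thesis unfolding gsym using path_avoid[OF fin bij xP, of a b] by simp
  qed
  have gb: "g b = f a" and ga: "g a = f b" unfolding g_def sw_def using ab by auto
  have "a \<in> orb g b"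
  proof -
    have "a \<in> orb g (f a)" using ra app_in_orb by metis
    moreover have "f a \<in> orb g b" using gb app_in_orb by metis
    ultimately show ?thesis using orb_trans[of "f a" g b a] by simp
  qed
  have "b \<in> orb g a"
  proof -
    have "b \<in> orb g (f b)" using rb app_in_orb by metis
    moreover have "f b \<in> orb g a" using ga app_in_orb by metis
    ultimately show ?thesis using orb_trans[of "f b" g a b] by simp
  qed
  have ab_g: "a \<in> orb g x" if "x \<in> U" for x
  proof (cases "x \<in> orb f a")
    case True then show ?thesis using ra by simp
  next
    case False then have "x \<in> orb f b" using that unfolding U_def by simp
    then show ?thesis using orb_trans[OF rb \<open>a \<in> orb g b\<close>] by simp
  qed
  have finv: "f ` U \<subseteq> U" unfolding U_def by (auto intro: orb_app)
  have orbga: "orb g a = U"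
  proof
    have "a \<in> U" "b \<in> U" unfolding U_def by (simp_all add: self_in_orb)
    then show "orb g a \<subseteq> U" unfolding g_def using inv_orb[OF finv] by simp
    show "U \<subseteq> orb g a"
    proof
      fix y assume "y \<in> U"
      then have "a \<in> orb g y" using ab_g by blast
      moreover have "y \<in> P" using \<open>y \<in> U\<close> oaP obP unfolding U_def by blast
      ultimately show "y \<in> orb g a" using orb_sym[OF fin bijg] by simp
    qed
  qed
  show A: "\<forall>x\<in>U. orb g x = U"
  proof
    fix x assume "x \<in> U"
    then have "x \<in> orb g a" using orbga by simp
    moreover have "x \<in> P" using \<open>x \<in> U\<close> oaP obP unfolding U_def by blast
    ultimately show "orb g x = U" using orb_eq[OF fin bijg aP \<open>x \<in> orb g a\<close>] orbga by simp
  qed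
  have avoid: "\<forall>j. (f ^^ j) x \<notin> {a, b}" if "x \<in> P - U" for x
  proof (intro allI notI)
    fix j assume "(f ^^ j) x \<in> {a, b}"
    then have "a \<in> orb f x \<or> b \<in> orb f x" using iter_in_orb[where f=f and i=j and x=x] by auto
    moreover have "x \<in> P" using that by simp
    ultimately have "x \<in> orb f a \<or> x \<in> orb f b" using orb_sym[OF fin bij \<open>x \<in> P\<close>, of a] orb_sym[OF fin bij \<open>x \<in> P\<close>, of b] by blast
    then show False using that unfolding U_def by simp
  qed
  show B: "\<forall>x\<in>P - U. orb g x = orb f x"
  proof
    fix x assume "x \<in> P - U"
    then show "orb g x = orb f x" unfolding g_def using agree_orb[OF avoid] by simp
  qed
  have eq: "orbs g P = insert U (orbs f P - {orb f a, orb f b})"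
  proof
    show "orbs g P \<subseteq> insert U (orbs f P - {orb f a, orb f b})"
    proof
      fix Z assume "Z \<in> orbs g P"
      then obtain x where x: "x \<in> P" "Z = orb g x" unfolding orbs_def by blast
      show "Z \<in> insert U (orbs f P - {orb f a, orb f b})"
      proof (cases "x \<in> U")
        case True then show ?thesis using A x by simp
      next
        case False
        then have "Z = orb f x" using B x by simp
        moreover have "orb f x \<noteq> orb f a" "orb f x \<noteq> orb f b"
          using False self_in_orb[of x f] unfolding U_def by auto
        ultimately show ?thesis using x unfolding orbs_def by blast
      qed
    qed
    show "insert U (orbs f P - {orb f a, orb f b}) \<subseteq> orbs g P"
    proof
      fix Z assume Z: "Z \<in> insert U (orbs f P - {orb f a, orb f b})"
      show "Z \<in> orbs g P"
      proof (cases "Z = U")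
        case True then show ?thesis using orbga aP unfolding orbs_def by blast
      next
        case False
        then obtain x where x: "x \<in> P" "Z = orb f x" "Z \<noteq> orb f a" "Z \<noteq> orb f b"
          using Z unfolding orbs_def by blast
        have "x \<notin> U"
        proof
          assume "x \<in> U"
          then show False using x orb_eq[OF fin bij aP, of x] orb_eq[OF fin bij bP, of x]
            unfolding U_def by blast
        qed
        then have "Z = orb g x" using B x by simp
        then show ?thesis using x unfolding orbs_def by blast
      qed
    qed
  qed
  have finO: "finite (orbs f P)" unfolding orbs_def using fin by simp
  have Unot: "U \<notin> orbs f P - {orb f a, orb f b}"
  proof
    assume "U \<in> orbs f P - {orb f a, orb f b}"
    then obtain x where x: "x \<in> P" "U = orb f x" "U \<noteq> orb f a" "U \<noteq> orb f b"
      unfolding orbs_def by blast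
    then have "x \<in> U" using self_in_orb by metis
    then show False using x orb_eq[OF fin bij aP, of x] orb_eq[OF fin bij bP, of x]
      unfolding U_def by blast
  qed
  have neq: "orb f a \<noteq> orb f b" using na self_in_orb by metis
  have mem: "orb f a \<in> orbs f P" "orb f b \<in> orbs f P" using aP bP unfolding orbs_def by blast+
  have "card (orbs f P - {orb f a, orb f b}) + 2 = card (orbs f P)"
  proof -
    have "card (orbs f P - {orb f a, orb f b}) = card (orbs f P) - card {orb f a, orb f b}"
      using card_Diff_subset[OF _ ] mem finO by (intro card_Diff_subset) auto
    moreover have "card {orb f a, orb f b} = 2" using neq by simp
    moreover have "card (orbs f P) \<ge> 2"
      using card_mono[OF finO, of "{orb f a, orb f b}"] mem neq by simp
    ultimately show ?thesis by simp
  qed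
  then show "card (orbs g P) + 1 = card (orbs f P)"
    unfolding eq using Unot finO by simp
qed


lemma split_not:
  assumes fin: "finite P" and bij: "bij_betw f P P" and aP: "a \<in> P" and bP: "b \<in> P"
    and ab: "a \<noteq> b" and yb: "b \<in> orb f a"
  shows "b \<notin> orb (\<lambda>x. f (sw a b x)) a"
proof -
  let ?g = "\<lambda>x. f (sw a b x)"
  have ain: "a \<in> orb f b" using orb_sym[OF fin bij aP yb] .
  obtain i where i: "(f ^^ i) b = a" "\<forall>j<i. (f ^^ j) b \<noteq> a" using orb_least[OF ain] by blast
  have i0: "i > 0"
  proof (rule ccontr)
    assume "\<not> i > 0" then have "i = 0" by simp
    then have "(f ^^ i) b = b" by simp
    then show False using i(1) ab by simp
  qed
  have nb: "(f ^^ j) b \<noteq> b" if "0 < j" "j < i" for j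
  proof
    assume h: "(f ^^ j) b = b"
    have "(f ^^ i) b = (f ^^ (i - j)) ((f ^^ j) b)"
    proof -
      have "i = (i - j) + j" using that by simp
      then have "(f ^^ i) b = (f ^^ ((i - j) + j)) b" by simp
      then show ?thesis by (simp only: funpow_add comp_apply)
    qed
    then have e: "(f ^^ (i - j)) b = a" using h i(1) by simp
    have "i - j < i" using that by simp
    then show False using i(2) e by blast
  qed
  have it: "(?g ^^ t) a = (f ^^ t) b" if "1 \<le> t" "t \<le> i" for t
    using that
  proof (induction t)
    case 0 then show ?case by simp
  next
    case (Suc t)
    show ?case
    proof (cases "t = 0")
      case True then show ?thesis by (simp add: sw_def)
    next
      case False
      then have "(?g ^^ t) a = (f ^^ t) b" using Suc by simp
      moreover have "t < i" using Suc.prems by simp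
      moreover have "(f ^^ t) b \<noteq> a" using i(2) \<open>t < i\<close> by blast
      moreover have "(f ^^ t) b \<noteq> b" using nb[of t] False \<open>t < i\<close> by simp
      ultimately show ?thesis by (simp add: sw_def)
    qed
  qed
  have per: "(?g ^^ i) a = a" using it[of i] i0 i(1) by simp
  have oe: "orb ?g a = {(?g ^^ t) a | t. t < i}" using orb_periodic[OF i0 per] .
  have ne: "(?g ^^ t) a \<noteq> b" if "t < i" for t
  proof (cases "t = 0")
    case True then show ?thesis using ab by simp
  next
    case False
    then have "(?g ^^ t) a = (f ^^ t) b" using it[of t] that by simp
    moreover have "(f ^^ t) b \<noteq> b" using nb[of t] False that by simp
    ultimately show ?thesis by simp
  qed
  show ?thesis
  proof
    assume "b \<in> orb ?g a"
    then obtain t where t: "t < i" "b = (?g ^^ t) a" using oe by blast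
    then show False using ne[OF t(1)] by simp
  qed
qed

lemma split_card:
  assumes fin: "finite P" and bij: "bij_betw f P P" and aP: "a \<in> P" and bP: "b \<in> P"
    and ab: "a \<noteq> b" and yb: "b \<in> orb f a"
  shows "card (orbs f P) \<le> card (orbs (\<lambda>x. f (sw a b x)) P)"
proof -
  let ?g = "\<lambda>x. f (sw a b x)"
  have bijg: "bij_betw ?g P P" using bij_comp_sw[OF bij aP bP] .
  have nb: "b \<notin> orb ?g a" using split_not[OF assms] .
  have oeq: "orb f b = orb f a" using orb_eq[OF fin bij aP yb] .
  have finv: "f ` orb f a \<subseteq> orb f a" by (auto intro: orb_app)
  have bin: "b \<in> orb f a" using yb .
  have ga: "orb ?g a \<subseteq> orb f a" using inv_orb[OF finv self_in_orb bin self_in_orb] .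
  have gb: "orb ?g b \<subseteq> orb f a" using inv_orb[OF finv self_in_orb bin bin] .
  let ?R = "orbs f P - {orb f a}"
  have sub: "insert (orb ?g a) (insert (orb ?g b) ?R) \<subseteq> orbs ?g P"
  proof -
    have "orb ?g a \<in> orbs ?g P" "orb ?g b \<in> orbs ?g P" using aP bP unfolding orbs_def by blast+
    moreover have "?R \<subseteq> orbs ?g P"
    proof
      fix Z assume "Z \<in> ?R"
      then obtain x where x: "x \<in> P" "Z = orb f x" "orb f x \<noteq> orb f a" unfolding orbs_def by blast
      have "\<forall>j. (f ^^ j) x \<notin> {a, b}"
      proof (intro allI notI)
        fix j assume "(f ^^ j) x \<in> {a, b}"
        then have "a \<in> orb f x \<or> b \<in> orb f x" using iter_in_orb[where f=f and i=j and x=x] by auto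
        then show False
        proof
          assume "a \<in> orb f x" then have "orb f a = orb f x" using orb_eq[OF fin bij x(1)] by simp
          then show False using x(3) by simp
        next
          assume "b \<in> orb f x" then have "orb f b = orb f x" using orb_eq[OF fin bij x(1)] by simp
          then show False using x(3) oeq by simp
        qed
      qed
      then have "orb ?g x = orb f x" by (rule agree_orb)
      then have "Z = orb ?g x" using x by simp
      then show "Z \<in> orbs ?g P" using x unfolding orbs_def by blast
    qed
    ultimately show ?thesis by blast
  qed
  have finG: "finite (orbs ?g P)" unfolding orbs_def using fin by simp
  have finO: "finite (orbs f P)" unfolding orbs_def using fin by simp
  have n1: "orb ?g a \<notin> insert (orb ?g b) ?R"
  proof
    assume "orb ?g a \<in> insert (orb ?g b) ?R"
    moreover have "orb ?g a \<noteq> orb ?g b" using nb self_in_orb by metis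
    ultimately obtain x where x: "x \<in> P" "orb ?g a = orb f x" "orb f x \<noteq> orb f a" unfolding orbs_def by blast
    then have "a \<in> orb f x" using self_in_orb[of a ?g] by simp
    then have "orb f a = orb f x" using orb_eq[OF fin bij x(1)] by simp
    then show False using x(3) by simp
  qed
  have n2: "orb ?g b \<notin> ?R"
  proof
    assume "orb ?g b \<in> ?R"
    then obtain x where x: "x \<in> P" "orb ?g b = orb f x" "orb f x \<noteq> orb f a" unfolding orbs_def by blast
    then have "b \<in> orb f x" using self_in_orb[of b ?g] by simp
    then have "orb f b = orb f x" using orb_eq[OF fin bij x(1)] by simp
    then show False using x(3) oeq by simp
  qed
  have "card (insert (orb ?g a) (insert (orb ?g b) ?R)) = card ?R + 2"
    using n1 n2 finO by simp
  moreover have "card ?R + 1 = card (orbs f P)"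
  proof -
    have "orb f a \<in> orbs f P" using aP unfolding orbs_def by blast
    moreover have "card (orbs f P) > 0" using finO \<open>orb f a \<in> orbs f P\<close> card_gt_0_iff by blast
    ultimately show ?thesis using card_Diff_singleton[of "orb f a" "orbs f P"] by simp
  qed
  ultimately show ?thesis using card_mono[OF finG sub] by simp
qed

lemma step_card:
  assumes fin: "finite P" and bij: "bij_betw f P P" and aP: "a \<in> P" and bP: "b \<in> P"
    and ab: "a \<noteq> b"
  shows "card (orbs f P) \<le> card (orbs (\<lambda>x. f (sw a b x)) P) + 1"
proof (cases "b \<in> orb f a")
  case True then show ?thesis using split_card[OF assms True] by simp
next
  case False then show ?thesis using merge(1)[OF assms False] by simp
qed


section \<open>Next point\<close>

lemma nxt_gt: "{q\<in>P. y < q} \<noteq> {} \<Longrightarrow> nxt P y = Min {q\<in>P. y < q}"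
  unfolding nxt_def by (rule if_not_P)

lemma nxt_wrap: "{q\<in>P. y < q} = {} \<Longrightarrow> nxt P y = Min P"
  unfolding nxt_def by (rule if_P)

lemma nxt_in: "finite P \<Longrightarrow> P \<noteq> {} \<Longrightarrow> nxt P y \<in> P"
proof -
  assume fin: "finite P" and ne: "P \<noteq> {}"
  show ?thesis
  proof (cases "{q\<in>P. y < q} = {}")
    case True then show ?thesis using nxt_wrap Min_in[OF fin ne] by metis
  next
    case False
    have "finite {q\<in>P. y < q}" using fin by simp
    then have "Min {q\<in>P. y < q} \<in> {q\<in>P. y < q}" using Min_in False by blast
    then show ?thesis using nxt_gt[OF False] by simp
  qed
qed

lemma nxt_pred:
  assumes fin: "finite P" and uP: "u \<in> P" and u': "u' \<in> P" "u' < u"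
    and btw: "\<forall>q\<in>P. q < u \<longrightarrow> q \<le> u'"
  shows "nxt P u' = u"
proof -
  have ne: "{q\<in>P. u' < q} \<noteq> {}" using uP u' by auto
  have "Min {q\<in>P. u' < q} = u"
  proof (rule Min_eqI)
    show "finite {q\<in>P. u' < q}" using fin by simp
    show "u \<in> {q\<in>P. u' < q}" using uP u' by simp
    fix q assume "q \<in> {q\<in>P. u' < q}"
    then show "u \<le> q" using btw by force
  qed
  then show ?thesis using nxt_gt[OF ne] by simp
qed

lemma nxt_max:
  assumes fin: "finite P" "P \<noteq> {}"
  shows "nxt P (Max P) = Min P"
proof -
  have "{q\<in>P. Max P < q} = {}" using fin Max_ge by fastforce
  then show ?thesis by (rule nxt_wrap)
qed

lemma nxt_hit:
  assumes fin: "finite P" and uP: "u \<in> P" and nm: "u \<noteq> Min P"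
  shows "nxt P (Max {q\<in>P. q < u}) = u" "Max {q\<in>P. q < u} \<in> P" "Max {q\<in>P. q < u} < u"
proof -
  have ne: "P \<noteq> {}" using uP by auto
  have "Min P < u" using Min_le[OF fin uP] nm by simp
  then have L: "{q\<in>P. q < u} \<noteq> {}" using Min_in[OF fin ne] by blast
  have fL: "finite {q\<in>P. q < u}" using fin by simp
  have m: "Max {q\<in>P. q < u} \<in> {q\<in>P. q < u}" using Max_in[OF fL L] .
  then show "Max {q\<in>P. q < u} \<in> P" "Max {q\<in>P. q < u} < u" by simp_all
  show "nxt P (Max {q\<in>P. q < u}) = u"
    using nxt_pred[OF fin uP] m Max_ge[OF fL] by simp
qed

lemma nxt_surj:
  assumes fin: "finite P" and ne: "P \<noteq> {}"
  shows "nxt P ` P = P"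
proof
  show "nxt P ` P \<subseteq> P" using nxt_in[OF fin ne] by blast
  show "P \<subseteq> nxt P ` P"
  proof
    fix u assume uP: "u \<in> P"
    show "u \<in> nxt P ` P"
    proof (cases "u = Min P")
      case True then show ?thesis using nxt_max[OF fin ne] Max_in[OF fin ne] by (metis image_eqI)
    next
      case False then show ?thesis using nxt_hit[OF fin uP False] by (metis image_eqI)
    qed
  qed
qed

lemma nxt_bij:
  assumes fin: "finite P" and ne: "P \<noteq> {}"
  shows "bij_betw (nxt P) P P"
  unfolding bij_betw_def using nxt_surj[OF fin ne] finite_surj_inj[OF fin] by simp

lemma nxt_orb_min:
  assumes fin: "finite P" and ne: "P \<noteq> {}"
  shows "P \<subseteq> orb (nxt P) (Min P)"
proof
  fix u assume "u \<in> P"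
  then show "u \<in> orb (nxt P) (Min P)"
  proof (induction u rule: less_induct)
    case (less u)
    show ?case
    proof (cases "u = Min P")
      case True then show ?thesis using self_in_orb by simp
    next
      case False
      note h = nxt_hit[OF fin less.prems False]
      have "Max {q\<in>P. q < u} \<in> orb (nxt P) (Min P)" using less.IH h(2,3) by simp
      then have "nxt P (Max {q\<in>P. q < u}) \<in> orb (nxt P) (Min P)" by (rule orb_app)
      then show ?thesis using h(1) by simp
    qed
  qed
qed

lemma nxt_orb:
  assumes fin: "finite P" and xP: "x \<in> P"
  shows "orb (nxt P) x = P"
proof -
  have ne: "P \<noteq> {}" using xP by auto
  have bij: "bij_betw (nxt P) P P" using nxt_bij[OF fin ne] .
  have mP: "Min P \<in> P" using Min_in[OF fin ne] .
  have "x \<in> orb (nxt P) (Min P)" using nxt_orb_min[OF fin ne] xP by blast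
  then have "orb (nxt P) x = orb (nxt P) (Min P)" using orb_eq[OF fin bij mP] by simp
  moreover have "orb (nxt P) (Min P) = P"
    using nxt_orb_min[OF fin ne] orb_sub[OF bij mP] by simp
  ultimately show ?thesis by simp
qed

lemma nxt_sub_in:
  assumes fin: "finite P" and QP: "Q \<subseteq> P" and Qne: "Q \<noteq> {}" and z: "nxt P y \<in> Q"
  shows "nxt Q y = nxt P y"
proof (cases "{q\<in>P. y < q} = {}")
  case True
  then have zz: "nxt P y = Min P" by (rule nxt_wrap)
  have "{q\<in>Q. y < q} = {}" using True QP by auto
  then have "nxt Q y = Min Q" by (rule nxt_wrap)
  moreover have "Min Q = Min P"
  proof (rule Min_eqI)
    show "finite Q" using fin QP finite_subset by blast
    show "Min P \<in> Q" using z zz by simp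
    fix q assume "q \<in> Q" then show "Min P \<le> q" using QP fin by auto
  qed
  ultimately show ?thesis using zz by simp
next
  case False
  have fP: "finite {q\<in>P. y < q}" using fin by simp
  have zz: "nxt P y = Min {q\<in>P. y < q}" using nxt_gt[OF False] .
  have zin: "nxt P y \<in> {q\<in>P. y < q}" unfolding zz using Min_in[OF fP False] .
  have zmin: "\<forall>q\<in>P. y < q \<longrightarrow> nxt P y \<le> q" unfolding zz using Min_le[OF fP] by simp
  have ne: "{q\<in>Q. y < q} \<noteq> {}" using zin z by auto
  have "Min {q\<in>Q. y < q} = nxt P y"
  proof (rule Min_eqI)
    show "finite {q\<in>Q. y < q}" using finite_subset[OF QP fin] by simp
    show "nxt P y \<in> {q\<in>Q. y < q}" using zin z by simp
    fix q assume "q \<in> {q\<in>Q. y < q}" then show "nxt P y \<le> q" using zmin QP by auto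
  qed
  then show ?thesis using nxt_gt[OF ne] by simp
qed

lemma nxt_sub_out:
  assumes fin: "finite P" and QP: "Q \<subseteq> P" and Qne: "Q \<noteq> {}" and z: "nxt P y \<notin> Q"
  shows "nxt Q (nxt P y) = nxt Q y"
proof (cases "{q\<in>P. y < q} = {}")
  case True
  then have zz: "nxt P y = Min P" by (rule nxt_wrap)
  have "{q\<in>Q. y < q} = {}" using True QP by auto
  then have "nxt Q y = Min Q" by (rule nxt_wrap)
  moreover have "{q\<in>Q. Min P < q} = Q"
  proof -
    have "\<forall>q\<in>Q. Min P \<le> q" using QP fin by auto
    moreover have "Min P \<notin> Q" using z zz by simp
    ultimately show ?thesis using le_neq_implies_less by blast
  qed
  ultimately show ?thesis unfolding zz using Qne nxt_gt[of Q "Min P"] by simp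
next
  case False
  have fP: "finite {q\<in>P. y < q}" using fin by simp
  have zz: "nxt P y = Min {q\<in>P. y < q}" using nxt_gt[OF False] .
  have zin: "nxt P y \<in> {q\<in>P. y < q}" unfolding zz using Min_in[OF fP False] .
  have zmin: "\<forall>q\<in>P. y < q \<longrightarrow> nxt P y \<le> q" unfolding zz using Min_le[OF fP] by simp
  have "{q\<in>Q. nxt P y < q} = {q\<in>Q. y < q}"
  proof
    show "{q\<in>Q. nxt P y < q} \<subseteq> {q\<in>Q. y < q}" using zin by auto
    show "{q\<in>Q. y < q} \<subseteq> {q\<in>Q. nxt P y < q}"
    proof
      fix q assume q: "q \<in> {q\<in>Q. y < q}"
      then have "nxt P y \<le> q" using zmin QP by auto
      moreover have "q \<noteq> nxt P y" using q z by auto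
      ultimately show "q \<in> {q\<in>Q. nxt P y < q}" using q by simp
    qed
  qed
  then show ?thesis unfolding nxt_def[of Q] by (simp only:)
qed


lemma nxt_iter_in: "finite P \<Longrightarrow> P \<noteq> {} \<Longrightarrow> y \<in> P \<Longrightarrow> (nxt P ^^ t) y \<in> P"
  using funpow_in[of "nxt P" P y t] nxt_in[of P] by blast

lemma nxt_first_hit:
  assumes fin: "finite P" and QP: "Q \<subseteq> P" and Qne: "Q \<noteq> {}"
  shows "\<exists>j\<ge>1. (nxt P ^^ j) y \<in> Q \<and> (\<forall>t. 0 < t \<and> t < j \<longrightarrow> (nxt P ^^ t) y \<notin> Q)"
proof -
  have ne: "P \<noteq> {}" using Qne QP by blast
  obtain q where q: "q \<in> Q" using Qne by blast
  have yP: "nxt P y \<in> P" using nxt_in[OF fin ne] .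
  have "q \<in> orb (nxt P) (nxt P y)" using nxt_orb[OF fin yP] q QP by blast
  then obtain s where "q = (nxt P ^^ s) (nxt P y)" unfolding orb_def by blast
  then have "q = (nxt P ^^ Suc s) y" by (simp add: funpow_Suc_right del: funpow.simps)
  then have ex: "\<exists>j. 1 \<le> j \<and> (nxt P ^^ j) y \<in> Q" using q by (intro exI[of _ "Suc s"]) simp
  obtain j where j: "1 \<le> j \<and> (nxt P ^^ j) y \<in> Q" "\<forall>t<j. \<not> (1 \<le> t \<and> (nxt P ^^ t) y \<in> Q)"
    using exists_least_iff[of "\<lambda>j. 1 \<le> j \<and> (nxt P ^^ j) y \<in> Q"] ex by blast
  show ?thesis
  proof (intro exI[of _ j] conjI allI impI)
    show "1 \<le> j" "(nxt P ^^ j) y \<in> Q" using j(1) by simp_all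
    fix t assume "0 < t \<and> t < j"
    then show "(nxt P ^^ t) y \<notin> Q" using j(2) by simp
  qed
qed

lemma nxt_first:
  assumes fin: "finite P" and QP: "Q \<subseteq> P" and Qne: "Q \<noteq> {}"
  shows "\<exists>j\<ge>1. (nxt P ^^ j) y = nxt Q y \<and> (\<forall>t. 0 < t \<and> t < j \<longrightarrow> (nxt P ^^ t) y \<notin> Q)"
proof -
  obtain j where j: "j \<ge> 1" "(nxt P ^^ j) y \<in> Q" "\<forall>t. 0 < t \<and> t < j \<longrightarrow> (nxt P ^^ t) y \<notin> Q"
    using nxt_first_hit[OF assms] by blast
  have inv: "nxt Q ((nxt P ^^ t) y) = nxt Q y" if "t < j" for t
    using that
  proof (induction t)
    case 0 then show ?case by simp
  next
    case (Suc t)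
    then have "nxt Q ((nxt P ^^ t) y) = nxt Q y" by simp
    moreover have "(nxt P ^^ Suc t) y \<notin> Q" using j(3) Suc.prems by blast
    then have "nxt P ((nxt P ^^ t) y) \<notin> Q" by simp
    ultimately show ?case using nxt_sub_out[OF fin QP Qne] by simp
  qed
  have "j - 1 < j" using j(1) by simp
  note i1 = inv[OF this]
  have jj: "Suc (j - 1) = j" using j(1) by simp
  have "nxt P ((nxt P ^^ (j - 1)) y) = (nxt P ^^ j) y"
    using jj by (metis funpow.simps(2) comp_apply)
  then have "nxt Q ((nxt P ^^ (j - 1)) y) = (nxt P ^^ j) y"
    using nxt_sub_in[OF fin QP Qne] j(2) by metis
  then show ?thesis using i1 j by metis
qed


lemma orb_cong:
  assumes "\<forall>x\<in>P. f x = g x" "f ` P \<subseteq> P" "x \<in> P"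
  shows "orb f x = orb g x"
proof -
  have "(f ^^ i) x = (g ^^ i) x \<and> (f ^^ i) x \<in> P" for i
  proof (induction i)
    case 0 then show ?case using assms(3) by simp
  next
    case (Suc i) then show ?case using assms(1,2) by auto
  qed
  then show ?thesis unfolding orb_def by auto
qed

lemma first_return_card:
  assumes fin: "finite P" and bij: "bij_betw \<pi> P P" and QP: "Q \<subseteq> P"
    and sQ: "\<sigma> ` Q \<subseteq> Q"
    and fr: "\<forall>x\<in>Q. \<exists>j\<ge>1. (\<pi> ^^ j) x = \<sigma> x \<and> (\<forall>t. 0 < t \<and> t < j \<longrightarrow> (\<pi> ^^ t) x \<notin> Q)"
    and meets: "\<forall>x\<in>P. \<exists>t. (\<pi> ^^ t) x \<in> Q"
  shows "card (orbs \<sigma> Q) = card (orbs \<pi> P)"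
proof -
  have s_in: "\<sigma> x \<in> orb \<pi> x" if "x \<in> Q" for x
    using fr that iter_in_orb by metis
  have sub1: "orb \<sigma> x \<subseteq> orb \<pi> x \<inter> Q" if xQ: "x \<in> Q" for x
  proof -
    have "(\<sigma> ^^ n) x \<in> orb \<pi> x \<and> (\<sigma> ^^ n) x \<in> Q" for n
    proof (induction n)
      case 0 then show ?case using xQ self_in_orb by simp
    next
      case (Suc n)
      then have h: "(\<sigma> ^^ n) x \<in> orb \<pi> x" "(\<sigma> ^^ n) x \<in> Q" by simp_all
      have "\<sigma> ((\<sigma> ^^ n) x) \<in> orb \<pi> ((\<sigma> ^^ n) x)" using s_in[OF h(2)] .
      then have "\<sigma> ((\<sigma> ^^ n) x) \<in> orb \<pi> x" using orb_trans[OF h(1)] by simp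
      moreover have "\<sigma> ((\<sigma> ^^ n) x) \<in> Q" using sQ h(2) by blast
      ultimately show ?case by simp
    qed
    then show ?thesis unfolding orb_def by blast
  qed
  have sub2: "\<forall>x\<in>Q. (\<pi> ^^ i) x \<in> Q \<longrightarrow> (\<pi> ^^ i) x \<in> orb \<sigma> x" for i
  proof (induction i rule: less_induct)
    case (less i)
    show ?case
    proof (intro ballI impI)
      fix x assume xQ: "x \<in> Q" and iQ: "(\<pi> ^^ i) x \<in> Q"
      obtain j where j: "j \<ge> 1" "(\<pi> ^^ j) x = \<sigma> x" "\<forall>t. 0 < t \<and> t < j \<longrightarrow> (\<pi> ^^ t) x \<notin> Q"
        using fr xQ by blast
      show "(\<pi> ^^ i) x \<in> orb \<sigma> x"
      proof (cases "i = 0")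
        case True then show ?thesis using self_in_orb by simp
      next
        case False
        have "\<not> i < j"
        proof
          assume "i < j" then show False using j(3) iQ False by blast
        qed
        then have ij: "i = (i - j) + j" "i - j < i" using j(1) by simp_all
        have e: "(\<pi> ^^ i) x = (\<pi> ^^ (i - j)) (\<sigma> x)"
        proof -
          have "(\<pi> ^^ i) x = (\<pi> ^^ ((i - j) + j)) x" using ij(1) by simp
          also have "\<dots> = (\<pi> ^^ (i - j)) ((\<pi> ^^ j) x)" by (simp only: funpow_add comp_apply)
          finally show ?thesis using j(2) by simp
        qed
        have sxQ: "\<sigma> x \<in> Q" using sQ xQ by blast
        have "(\<pi> ^^ (i - j)) (\<sigma> x) \<in> orb \<sigma> (\<sigma> x)"
          using less.IH[OF ij(2)] sxQ iQ e by simp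
        then show ?thesis using e orb_trans[OF app_in_orb[of \<sigma> x]] by simp
      qed
    qed
  qed
  have oeq: "orb \<sigma> x = orb \<pi> x \<inter> Q" if "x \<in> Q" for x
  proof
    show "orb \<sigma> x \<subseteq> orb \<pi> x \<inter> Q" using sub1[OF that] .
    show "orb \<pi> x \<inter> Q \<subseteq> orb \<sigma> x"
    proof
      fix y assume "y \<in> orb \<pi> x \<inter> Q"
      then obtain i where yi: "y = (\<pi> ^^ i) x" "y \<in> Q" unfolding orb_def by blast
      have "(\<pi> ^^ i) x \<in> Q \<longrightarrow> (\<pi> ^^ i) x \<in> orb \<sigma> x" using sub2[of i] that by (rule bspec)
      then show "y \<in> orb \<sigma> x" using yi by simp
    qed
  qed
  have meetQ: "\<exists>q. q \<in> orb \<pi> x \<inter> Q" if xP: "x \<in> P" for x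
  proof -
    obtain t where "(\<pi> ^^ t) x \<in> Q" using bspec[OF meets xP] by blast
    moreover have "(\<pi> ^^ t) x \<in> orb \<pi> x" by (rule iter_in_orb)
    ultimately show ?thesis by blast
  qed
  have bb: "bij_betw (\<lambda>Z. Z \<inter> Q) (orbs \<pi> P) (orbs \<sigma> Q)"
  proof (rule bij_betw_imageI)
    show "inj_on (\<lambda>Z. Z \<inter> Q) (orbs \<pi> P)"
    proof (rule inj_onI)
      fix Z1 Z2 assume Z1: "Z1 \<in> orbs \<pi> P" and Z2: "Z2 \<in> orbs \<pi> P" and e: "Z1 \<inter> Q = Z2 \<inter> Q"
      obtain x1 where x1: "x1 \<in> P" "Z1 = orb \<pi> x1" using Z1 unfolding orbs_def by blast
      obtain x2 where x2: "x2 \<in> P" "Z2 = orb \<pi> x2" using Z2 unfolding orbs_def by blast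
      obtain q where q: "q \<in> orb \<pi> x1 \<inter> Q" using meetQ[OF x1(1)] by blast
      then have q2: "q \<in> orb \<pi> x2" using e x1 x2 by blast
      have "orb \<pi> q = orb \<pi> x1" using orb_eq[OF fin bij x1(1)] q by blast
      moreover have "orb \<pi> q = orb \<pi> x2" using orb_eq[OF fin bij x2(1) q2] .
      ultimately show "Z1 = Z2" using x1 x2 by simp
    qed
    show "(\<lambda>Z. Z \<inter> Q) ` orbs \<pi> P = orbs \<sigma> Q"
    proof
      show "(\<lambda>Z. Z \<inter> Q) ` orbs \<pi> P \<subseteq> orbs \<sigma> Q"
      proof
        fix Y assume "Y \<in> (\<lambda>Z. Z \<inter> Q) ` orbs \<pi> P"
        then obtain x where x: "x \<in> P" "Y = orb \<pi> x \<inter> Q" unfolding orbs_def by blast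
        obtain q where q: "q \<in> orb \<pi> x \<inter> Q" using meetQ[OF x(1)] by blast
        have "orb \<pi> q = orb \<pi> x" using orb_eq[OF fin bij x(1)] q by blast
        then have "Y = orb \<sigma> q" using oeq[of q] q x(2) by simp
        then show "Y \<in> orbs \<sigma> Q" using q unfolding orbs_def by blast
      qed
      show "orbs \<sigma> Q \<subseteq> (\<lambda>Z. Z \<inter> Q) ` orbs \<pi> P"
      proof
        fix Y assume "Y \<in> orbs \<sigma> Q"
        then obtain x where x: "x \<in> Q" "Y = orb \<sigma> x" unfolding orbs_def by blast
        then have "Y = orb \<pi> x \<inter> Q" using oeq by simp
        moreover have "orb \<pi> x \<in> orbs \<pi> P" using x QP unfolding orbs_def by blast
        ultimately show "Y \<in> (\<lambda>Z. Z \<inter> Q) ` orbs \<pi> P" by blast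
      qed
    qed
  qed
  then show ?thesis using bij_betw_same_card by metis
qed


fun trs :: "(nat \<Rightarrow> nat) \<Rightarrow> (nat \<Rightarrow> nat) \<Rightarrow> nat \<Rightarrow> nat \<Rightarrow> nat" where
  "trs v m 0 x = x"
| "trs v m (Suc j) x = trs v m j (sw (v (Suc j)) (m (v (Suc j))) x)"

locale bridge =
  fixes P :: "nat set" and m :: "nat \<Rightarrow> nat" and ini :: "nat \<Rightarrow> bool"
    and p :: nat and k :: nat and c :: bool
  assumes g: "gauss P m ini" and pP: "p \<in> P" and k1: "k \<ge> 1"
    and br: "\<forall>i\<in>{1..k}. ini ((nxt P ^^ i) p) = c"
begin

definition v where "v i = (nxt P ^^ i) p"
definition w where "w i = m (v i)"
definition sg where "sg = cstep P m"
definition sgj where "sgj j x = sg (trs v m j x)"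

lemma fin: "finite P" using g unfolding gauss_def by simp
lemma ne: "P \<noteq> {}" using pP by auto
lemma m_in: "x \<in> P \<Longrightarrow> m x \<in> P" using g unfolding gauss_def by simp
lemma mm: "x \<in> P \<Longrightarrow> m (m x) = x" using g unfolding gauss_def by simp
lemma m_ini: "x \<in> P \<Longrightarrow> ini (m x) \<longleftrightarrow> \<not> ini x" using g unfolding gauss_def by metis

lemma bij_m: "bij_betw m P P"
  by (rule bij_betw_byWitness[where f'=m]) (auto simp: mm m_in)

lemma sg_eq: "sg x = nxt P (m x)" unfolding sg_def cstep_def by simp

lemma bij_sg: "bij_betw sg P P"
proof -
  have "bij_betw (nxt P \<circ> m) P P" using bij_betw_trans[OF bij_m nxt_bij[OF fin ne]] .
  moreover have "nxt P \<circ> m = sg" using sg_eq by (simp add: fun_eq_iff)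
  ultimately show ?thesis by simp
qed

lemma v_in: "v i \<in> P" unfolding v_def using nxt_iter_in[OF fin ne pP] .
lemma v_Suc: "nxt P (v i) = v (Suc i)" unfolding v_def by simp
lemma v_ini: "1 \<le> i \<Longrightarrow> i \<le> k \<Longrightarrow> ini (v i) = c" using br unfolding v_def by simp
lemma w_in: "w i \<in> P" unfolding w_def using m_in v_in by simp
lemma w_ini: "1 \<le> i \<Longrightarrow> i \<le> k \<Longrightarrow> ini (w i) = (\<not> c)"
  unfolding w_def using m_ini[OF v_in] v_ini by simp
lemma m_w: "m (w i) = v i" unfolding w_def using mm v_in by simp
lemma sg_w: "sg (w i) = v (Suc i)" using sg_eq m_w v_Suc by simp

lemma w_ne_v: "1 \<le> i \<Longrightarrow> i \<le> k \<Longrightarrow> 1 \<le> j \<Longrightarrow> j \<le> k \<Longrightarrow> w i \<noteq> v j"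
  using w_ini v_ini by metis

lemma v_dist:
  assumes "1 \<le> i" "i < j" "j \<le> k"
  shows "v i \<noteq> v j"
proof
  assume e: "v i = v j"
  let ?d = "j - i"
  have d0: "?d > 0" using assms by simp
  have per: "(nxt P ^^ ?d) (v i) = v i"
  proof -
    have "(nxt P ^^ ?d) (v i) = (nxt P ^^ (?d + i)) p" unfolding v_def by (simp only: funpow_add comp_apply)
    also have "?d + i = j" using assms by simp
    finally show ?thesis using e unfolding v_def by simp
  qed
  have "orb (nxt P) (v i) = P" using nxt_orb[OF fin v_in] .
  moreover have "orb (nxt P) (v i) = {(nxt P ^^ t) (v i) | t. t < ?d}" using orb_periodic[OF d0 per] .
  ultimately have "m (v 1) \<in> {(nxt P ^^ t) (v i) | t. t < ?d}" using m_in[OF v_in] by simp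
  then obtain t where t: "t < ?d" "m (v 1) = (nxt P ^^ t) (v i)" by blast
  have "(nxt P ^^ t) (v i) = v (t + i)" unfolding v_def by (simp only: funpow_add comp_apply)
  then have "m (v 1) = v (t + i)" using t by simp
  moreover have "1 \<le> t + i" "t + i \<le> k" using t assms by simp_all
  ultimately have "ini (m (v 1)) = c" using v_ini by simp
  moreover have "ini (v 1) = c" using v_ini k1 by simp
  ultimately show False using m_ini[OF v_in] by simp
qed

lemma v_inj: "1 \<le> i \<Longrightarrow> i \<le> k \<Longrightarrow> 1 \<le> j \<Longrightarrow> j \<le> k \<Longrightarrow> v i = v j \<Longrightarrow> i = j"
proof -
  assume a: "1 \<le> i" "i \<le> k" "1 \<le> j" "j \<le> k" "v i = v j"
  show "i = j"
  proof (rule ccontr)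
    assume "i \<noteq> j"
    then have "i < j \<or> j < i" by arith
    then show False
    proof
      assume "i < j" then show False using v_dist[of i j] a by simp
    next
      assume "j < i" then show False using v_dist[of j i] a by simp
    qed
  qed
qed

lemma w_inj: "1 \<le> i \<Longrightarrow> i \<le> k \<Longrightarrow> 1 \<le> j \<Longrightarrow> j \<le> k \<Longrightarrow> w i = w j \<Longrightarrow> i = j"
proof -
  assume a: "1 \<le> i" "i \<le> k" "1 \<le> j" "j \<le> k" "w i = w j"
  then have "v i = v j" using m_w[of i] m_w[of j] by simp
  then show "i = j" using v_inj a by simp
qed

definition Wj where "Wj j = {v i | i. 1 \<le> i \<and> i \<le> j} \<union> {w i | i. 1 \<le> i \<and> i \<le> j}"

lemma trs_eq: "j \<le> k \<Longrightarrow> trs v m j x = (if x \<in> Wj j then m x else x)"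
proof (induction j arbitrary: x)
  case 0 then show ?case by (simp add: Wj_def)
next
  case (Suc j)
  let ?a = "v (Suc j)" and ?b = "w (Suc j)"
  have IH: "trs v m j y = (if y \<in> Wj j then m y else y)" for y using Suc by simp
  have aW: "?a \<notin> Wj j"
  proof
    assume "?a \<in> Wj j"
    then obtain i where "1 \<le> i" "i \<le> j" "?a = v i \<or> ?a = w i" unfolding Wj_def by blast
    then show False using v_inj[of "Suc j" i] w_ne_v[of i "Suc j"] Suc.prems by force
  qed
  have bW: "?b \<notin> Wj j"
  proof
    assume "?b \<in> Wj j"
    then obtain i where "1 \<le> i" "i \<le> j" "?b = v i \<or> ?b = w i" unfolding Wj_def by blast
    then show False using w_inj[of "Suc j" i] w_ne_v[of "Suc j" i] Suc.prems by force
  qed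
  have ab: "?a \<noteq> ?b" using w_ne_v[of "Suc j" "Suc j"] Suc.prems by simp
  have WS: "Wj (Suc j) = insert ?a (insert ?b (Wj j))"
    unfolding Wj_def by (auto simp: le_Suc_eq)
  have mb: "m ?b = ?a" using m_w by simp
  have ma: "m ?a = ?b" unfolding w_def by simp
  have swe: "sw ?a (m ?a) x = sw ?a ?b x" using ma by simp
  show ?case
  proof (cases "x = ?a")
    case True then show ?thesis using IH[of ?b] bW ma WS by (simp add: sw_def)
  next
    case F1: False
    show ?thesis
    proof (cases "x = ?b")
      case True then show ?thesis using IH[of ?a] aW mb ma WS ab by (simp add: sw_def)
    next
      case False then show ?thesis using IH[of x] F1 WS ma by (simp add: sw_def)
    qed
  qed
qed

lemma sgj_Suc: "sgj (Suc j) = (\<lambda>x. sgj j (sw (v (Suc j)) (w (Suc j)) x))"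
  unfolding sgj_def w_def by (simp add: fun_eq_iff)

lemma sgj_0: "sgj 0 = sg" unfolding sgj_def by (simp add: fun_eq_iff)

lemma bij_sgj: "bij_betw (sgj j) P P"
proof (induction j)
  case 0 then show ?case using bij_sg sgj_0 by simp
next
  case (Suc j) then show ?case unfolding sgj_Suc using bij_comp_sw[OF Suc v_in w_in] by simp
qed

end


context bridge
begin

definition W where "W = {q\<in>P. \<exists>i\<in>{1..k}. q = (nxt P ^^ i) p \<or> m q = (nxt P ^^ i) p}"
definition Q where "Q = {q\<in>P. \<forall>i\<in>{1..k}. q \<noteq> (nxt P ^^ i) p \<and> m q \<noteq> (nxt P ^^ i) p}"

lemma Q_eq: "Q = P - W" unfolding Q_def W_def by auto

lemma W_eq: "W = Wj k"
proof
  show "W \<subseteq> Wj k"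
  proof
    fix q assume "q \<in> W"
    then obtain i where i: "q \<in> P" "1 \<le> i" "i \<le> k" "q = v i \<or> m q = v i"
      unfolding W_def v_def by auto
    then have "q = v i \<or> q = w i" unfolding w_def using mm by metis
    then show "q \<in> Wj k" unfolding Wj_def using i by blast
  qed
  show "Wj k \<subseteq> W"
  proof
    fix q assume "q \<in> Wj k"
    then obtain i where i: "1 \<le> i" "i \<le> k" "q = v i \<or> q = w i" unfolding Wj_def by blast
    then have "q \<in> P" using v_in w_in by blast
    moreover have "q = v i \<or> m q = v i" using i m_w by blast
    ultimately show "q \<in> W" unfolding W_def v_def using i by auto
  qed
qed

lemma W_sub: "W \<subseteq> P" unfolding W_def by auto

lemma pi_eq: "sgj k x = (if x \<in> W then nxt P x else nxt P (m x))"
proof -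
  have "sgj k x = sg (if x \<in> W then m x else x)" unfolding sgj_def using trs_eq[of k x] W_eq by simp
  then show ?thesis using sg_eq mm W_sub by auto
qed

lemma card_W: "card W = 2 * k"
proof -
  have e: "Wj k = v ` {1..k} \<union> w ` {1..k}" unfolding Wj_def by auto
  have i1: "inj_on v {1..k}"
  proof (rule inj_onI)
    fix i j assume "i \<in> {1..k}" "j \<in> {1..k}" "v i = v j"
    then show "i = j" using v_inj[of i j] by simp
  qed
  have i2: "inj_on w {1..k}"
  proof (rule inj_onI)
    fix i j assume "i \<in> {1..k}" "j \<in> {1..k}" "w i = w j"
    then show "i = j" using w_inj[of i j] by simp
  qed
  have d: "v ` {1..k} \<inter> w ` {1..k} = {}"
  proof (rule ccontr)
    assume "v ` {1..k} \<inter> w ` {1..k} \<noteq> {}"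
    then obtain i j where "i \<in> {1..k}" "j \<in> {1..k}" "v i = w j" by blast
    then show False using w_ne_v[of j i] by simp
  qed
  have "card (Wj k) = card (v ` {1..k}) + card (w ` {1..k})"
    unfolding e using d by (intro card_Un_disjoint) auto
  also have "\<dots> = 2 * k" using card_image[OF i1] card_image[OF i2] by simp
  finally show ?thesis using W_eq by simp
qed

lemma card_Q: "card Q = card P - 2 * k" "2 * k \<le> card P"
proof -
  have "card W \<le> card P" using card_mono[OF fin W_sub] .
  then show "2 * k \<le> card P" using card_W by simp
  show "card Q = card P - 2 * k" unfolding Q_eq using card_Diff_subset[OF finite_subset[OF W_sub fin] W_sub] card_W by simp
qed

lemma cycles_orbs: "cycles S m = orbs (cstep S m) S"
  unfolding cycles_def orbs_def orb_def by simp

lemma c_eq: "num_cycles P m = card (orbs sg P)"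
  unfolding num_cycles_def using ne cycles_orbs sg_def by simp

lemma c'_eq: "num_cycles Q m = card (orbs (sgj k) P)"
proof (cases "Q = {}")
  case True
  then have WP: "W = P" using Q_eq W_sub by blast
  have "orbs (sgj k) P = {P}"
  proof -
    have "orb (sgj k) x = P" if "x \<in> P" for x
    proof -
      have "\<forall>y\<in>P. sgj k y = nxt P y" using pi_eq WP by simp
      moreover have "sgj k ` P \<subseteq> P" using bij_sgj bij_betw_imp_surj_on by blast
      ultimately have "orb (sgj k) x = orb (nxt P) x" using orb_cong[OF _ _ that] by blast
      then show ?thesis using nxt_orb[OF fin that] by simp
    qed
    then show ?thesis unfolding orbs_def using ne by auto
  qed
  then show ?thesis unfolding num_cycles_def using True by simp
next
  case False
  have QP: "Q \<subseteq> P" unfolding Q_eq by blast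
  have pW: "sgj k z = nxt P z" if "z \<in> P" "z \<notin> Q" for z
    using pi_eq that Q_eq by simp
  have pQ: "sgj k z = nxt P (m z)" if "z \<in> Q" for z
    using pi_eq that Q_eq by simp
  have "card (orbs (cstep Q m) Q) = card (orbs (sgj k) P)"
  proof (rule first_return_card[OF fin bij_sgj QP])
    show "cstep Q m ` Q \<subseteq> Q" unfolding cstep_def using nxt_in[OF finite_subset[OF QP fin] False] by blast
    show "\<forall>x\<in>Q. \<exists>j\<ge>1. (sgj k ^^ j) x = cstep Q m x \<and> (\<forall>t. 0 < t \<and> t < j \<longrightarrow> (sgj k ^^ t) x \<notin> Q)"
    proof
      fix x assume xQ: "x \<in> Q"
      have yP: "m x \<in> P" using m_in xQ QP by blast
      obtain j where j: "j \<ge> 1" "(nxt P ^^ j) (m x) = nxt Q (m x)"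
        "\<forall>t. 0 < t \<and> t < j \<longrightarrow> (nxt P ^^ t) (m x) \<notin> Q"
        using nxt_first[OF fin QP False] by blast
      have it: "(sgj k ^^ t) x = (nxt P ^^ t) (m x)" if "1 \<le> t" "t \<le> j" for t
        using that
      proof (induction t)
        case 0 then show ?case by simp
      next
        case (Suc t)
        show ?case
        proof (cases "t = 0")
          case True then show ?thesis using pQ[OF xQ] by simp
        next
          case False
          then have e: "(sgj k ^^ t) x = (nxt P ^^ t) (m x)" using Suc by simp
          have "(nxt P ^^ t) (m x) \<notin> Q" using j(3) False Suc.prems by simp
          moreover have "(nxt P ^^ t) (m x) \<in> P" using nxt_iter_in[OF fin ne yP] .
          ultimately show ?thesis using e pW by simp
        qed
      qed
      show "\<exists>j\<ge>1. (sgj k ^^ j) x = cstep Q m x \<and> (\<forall>t. 0 < t \<and> t < j \<longrightarrow> (sgj k ^^ t) x \<notin> Q)"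
      proof (intro exI[of _ j] conjI allI impI)
        show "1 \<le> j" using j(1) .
        show "(sgj k ^^ j) x = cstep Q m x" using it[of j] j(1,2) unfolding cstep_def by simp
        fix t assume "0 < t \<and> t < j"
        then show "(sgj k ^^ t) x \<notin> Q" using it[of t] j(3) by simp
      qed
    qed
    show "\<forall>x\<in>P. \<exists>t. (sgj k ^^ t) x \<in> Q"
    proof
      fix x assume xP: "x \<in> P"
      show "\<exists>t. (sgj k ^^ t) x \<in> Q"
      proof (cases "x \<in> Q")
        case True then show ?thesis by (intro exI[of _ 0]) simp
      next
        case xn: False
        obtain j where j: "j \<ge> 1" "(nxt P ^^ j) x \<in> Q"
          "\<forall>t. 0 < t \<and> t < j \<longrightarrow> (nxt P ^^ t) x \<notin> Q"
          using nxt_first_hit[OF fin QP False] by blast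
        have it: "(sgj k ^^ t) x = (nxt P ^^ t) x" if "t \<le> j" for t
          using that
        proof (induction t)
          case 0 then show ?case by simp
        next
          case (Suc t)
          then have e: "(sgj k ^^ t) x = (nxt P ^^ t) x" by simp
          have "(nxt P ^^ t) x \<notin> Q"
          proof (cases "t = 0")
            case True then show ?thesis using xn by simp
          next
            case False then show ?thesis using j(3) Suc.prems by simp
          qed
          moreover have "(nxt P ^^ t) x \<in> P" using nxt_iter_in[OF fin ne xP] .
          ultimately show ?case using e pW by simp
        qed
        have "(sgj k ^^ j) x \<in> Q" using it[of j] j(2) by simp
        then show ?thesis by blast
      qed
    qed
  qed
  then show ?thesis unfolding num_cycles_def using False cycles_orbs by simp
qed

end


context bridge
begin

definition Ob where "Ob i = orb sg (v i)"
definition D where "D j = (\<forall>i1 i2. 1 \<le> i1 \<longrightarrow> i1 \<le> Suc j \<longrightarrow> 1 \<le> i2 \<longrightarrow> i2 \<le> Suc j \<longrightarrow> i1 \<noteq> i2 \<longrightarrow> Ob i1 \<noteq> Ob i2)"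
definition UU where "UU j = {z. \<exists>i. 1 \<le> i \<and> i \<le> Suc j \<and> z \<in> Ob i}"

lemma UU_Suc: "UU (Suc j) = UU j \<union> Ob (Suc (Suc j))"
proof
  show "UU (Suc j) \<subseteq> UU j \<union> Ob (Suc (Suc j))"
  proof
    fix z assume "z \<in> UU (Suc j)"
    then obtain i where i: "1 \<le> i" "i \<le> Suc (Suc j)" "z \<in> Ob i" unfolding UU_def by blast
    show "z \<in> UU j \<union> Ob (Suc (Suc j))"
    proof (cases "i = Suc (Suc j)")
      case True then show ?thesis using i by simp
    next
      case False then have "i \<le> Suc j" using i by simp
      then show ?thesis unfolding UU_def using i by blast
    qed
  qed
  show "UU j \<union> Ob (Suc (Suc j)) \<subseteq> UU (Suc j)"
  proof
    fix z assume z: "z \<in> UU j \<union> Ob (Suc (Suc j))"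
    show "z \<in> UU (Suc j)"
    proof (cases "z \<in> UU j")
      case True
      then obtain i where i: "1 \<le> i" "i \<le> Suc j" "z \<in> Ob i" unfolding UU_def by blast
      then have "i \<le> Suc (Suc j)" by simp
      then show ?thesis unfolding UU_def using i by blast
    next
      case False
      then have zz: "z \<in> Ob (Suc (Suc j))" using z by simp
      have "1 \<le> Suc (Suc j)" "Suc (Suc j) \<le> Suc (Suc j)" by simp_all
      then show ?thesis unfolding UU_def using zz by blast
    qed
  qed
qed

lemma UU_0: "UU 0 = Ob 1"
proof
  show "UU 0 \<subseteq> Ob 1"
  proof
    fix z assume "z \<in> UU 0"
    then obtain i where i: "1 \<le> i" "i \<le> Suc 0" "z \<in> Ob i" unfolding UU_def by blast
    then have "i = 1" by simp
    then show "z \<in> Ob 1" using i by simp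
  qed
  show "Ob 1 \<subseteq> UU 0" unfolding UU_def by auto
qed

lemma v_in_UU: "1 \<le> i \<Longrightarrow> i \<le> Suc j \<Longrightarrow> v i \<in> UU j"
proof -
  assume "1 \<le> i" "i \<le> Suc j"
  moreover have "v i \<in> Ob i" unfolding Ob_def by (rule self_in_orb)
  ultimately show ?thesis unfolding UU_def by blast
qed

lemma w_in_Ob: "w i \<in> Ob (Suc i)"
proof -
  have h: "v (Suc i) \<in> orb sg (w i)" using app_in_orb[of sg "w i"] sg_w by simp
  show ?thesis unfolding Ob_def using orb_sym[OF fin bij_sg w_in h] .
qed

lemma Ob_eq: "x \<in> Ob i \<Longrightarrow> orb sg x = Ob i"
  unfolding Ob_def by (rule orb_eq[OF fin bij_sg v_in])

lemma D_mono: "D (Suc j) \<Longrightarrow> D j"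
  unfolding D_def by (meson le_SucI)

lemma D_0: "D 0" unfolding D_def by (intro allI impI) simp

lemma D_elim: "D j \<Longrightarrow> 1 \<le> i1 \<Longrightarrow> i1 \<le> Suc j \<Longrightarrow> 1 \<le> i2 \<Longrightarrow> i2 \<le> Suc j \<Longrightarrow> i1 \<noteq> i2 \<Longrightarrow> Ob i1 \<noteq> Ob i2"
  unfolding D_def by blast

lemma inv:
  "j \<le> k \<Longrightarrow> D j \<Longrightarrow> card (orbs (sgj j) P) + j = card (orbs sg P) \<and> orb (sgj j) (v 1) = UU j
     \<and> (\<forall>x\<in>P - UU j. orb (sgj j) x = orb sg x)"
proof (induction j)
  case 0 then show ?case using sgj_0 UU_0 Ob_def by simp
next
  case (Suc j)
  have Dj: "D j" using D_mono Suc.prems by blast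
  have IH: "card (orbs (sgj j) P) + j = card (orbs sg P)" "orb (sgj j) (v 1) = UU j"
    "\<forall>x\<in>P - UU j. orb (sgj j) x = orb sg x" using Suc.IH Suc.prems(1) Dj by simp_all
  let ?a = "v (Suc j)" and ?b = "w (Suc j)"
  have ab: "?a \<noteq> ?b" using w_ne_v[of "Suc j" "Suc j"] Suc.prems(1) by simp
  have aU: "?a \<in> UU j" using v_in_UU by simp
  have bU: "?b \<notin> UU j"
  proof
    assume "?b \<in> UU j"
    then obtain i where i: "1 \<le> i" "i \<le> Suc j" "?b \<in> Ob i" unfolding UU_def by blast
    have "Ob i = Ob (Suc (Suc j))" using Ob_eq[OF i(3)] Ob_eq[OF w_in_Ob] by simp
    moreover have "Ob i \<noteq> Ob (Suc (Suc j))" using D_elim[OF Suc.prems(2) i(1), of "Suc (Suc j)"] i(2) by simp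
    ultimately show False by simp
  qed
  have aO: "?a \<in> orb (sgj j) (v 1)" using aU IH(2) by simp
  have oa: "orb (sgj j) ?a = UU j" using orb_eq[OF fin bij_sgj v_in aO] IH(2) by simp
  have ob: "orb (sgj j) ?b = Ob (Suc (Suc j))"
    using IH(3) bU w_in Ob_eq[OF w_in_Ob] by simp
  have nb: "?b \<notin> orb (sgj j) ?a" using oa bU by simp
  note M = merge[OF fin bij_sgj v_in w_in ab nb]
  have g: "(\<lambda>x. sgj j (sw ?a ?b x)) = sgj (Suc j)" using sgj_Suc by simp
  have U: "orb (sgj j) ?a \<union> orb (sgj j) ?b = UU (Suc j)" using oa ob UU_Suc by simp
  have "card (orbs (sgj (Suc j)) P) + 1 = card (orbs (sgj j) P)" using M(1) g by simp
  then have c1: "card (orbs (sgj (Suc j)) P) + Suc j = card (orbs sg P)" using IH(1) by simp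
  have v1: "v 1 \<in> UU (Suc j)" using v_in_UU by simp
  have v1': "v 1 \<in> orb (sgj j) ?a \<union> orb (sgj j) ?b" using v1 U by simp
  have "orb (\<lambda>x. sgj j (sw ?a ?b x)) (v 1) = orb (sgj j) ?a \<union> orb (sgj j) ?b" using bspec[OF M(2) v1'] .
  then have c2: "orb (sgj (Suc j)) (v 1) = UU (Suc j)" unfolding g U .
  have c3: "\<forall>x\<in>P - UU (Suc j). orb (sgj (Suc j)) x = orb sg x"
  proof
    fix x assume x: "x \<in> P - UU (Suc j)"
    then have x': "x \<in> P - (orb (sgj j) ?a \<union> orb (sgj j) ?b)" using U by simp
    have "orb (\<lambda>x. sgj j (sw ?a ?b x)) x = orb (sgj j) x" using bspec[OF M(3) x'] .
    then have "orb (sgj (Suc j)) x = orb (sgj j) x" unfolding g .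
    moreover have "x \<in> P - UU j" using x UU_Suc by simp
    ultimately show "orb (sgj (Suc j)) x = orb sg x" using IH(3) by simp
  qed
  show ?case using c1 c2 c3 by simp
qed

lemma notD:
  assumes nD: "\<not> D k"
  shows "card (orbs (sgj k) P) + k \<ge> card (orbs sg P) + 1"
proof -
  obtain j where j: "\<not> D j" "\<forall>t<j. D t" using exists_least_iff[of "\<lambda>j. \<not> D j"] nD by blast
  have jk: "j \<le> k"
  proof (rule ccontr)
    assume "\<not> j \<le> k" then have "k < j" by simp
    then show False using j(2) nD by blast
  qed
  have j0: "j \<noteq> 0"
  proof
    assume "j = 0" then show False using j(1) D_0 by simp
  qed
  define j0 where "j0 = j - 1"
  have jj: "j = Suc j0" using j0 j0_def by simp
  have Dj0: "D j0" using j(2) jj by simp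
  have IH: "card (orbs (sgj j0) P) + j0 = card (orbs sg P)" "orb (sgj j0) (v 1) = UU j0"
    using inv[of j0] Dj0 jk jj by simp_all
  obtain i1 i2 where ii: "1 \<le> i1" "i1 \<le> Suc (Suc j0)" "1 \<le> i2" "i2 \<le> Suc (Suc j0)"
    "i1 \<noteq> i2" "Ob i1 = Ob i2" using j(1) jj unfolding D_def by blast
  have "\<exists>i. 1 \<le> i \<and> i \<le> Suc j0 \<and> Ob i = Ob (Suc (Suc j0))"
  proof (cases "i1 = Suc (Suc j0)")
    case True then show ?thesis using ii by (intro exI[of _ i2]) auto
  next
    case False
    show ?thesis
    proof (cases "i2 = Suc (Suc j0)")
      case True then show ?thesis using ii False by (intro exI[of _ i1]) auto
    next
      case F2: False
      then have "i1 \<le> Suc j0" "i2 \<le> Suc j0" using ii False by auto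
      then show ?thesis using D_elim[OF Dj0 ii(1) _ ii(3) _ ii(5)] ii(6) by simp
    qed
  qed
  then obtain i where i: "1 \<le> i" "i \<le> Suc j0" "Ob i = Ob (Suc (Suc j0))" by blast
  let ?a = "v (Suc j0)" and ?b = "w (Suc j0)"
  have ab: "?a \<noteq> ?b" using w_ne_v[of "Suc j0" "Suc j0"] jk jj by simp
  have "?b \<in> Ob i" using w_in_Ob i(3) by simp
  then have bU: "?b \<in> UU j0" unfolding UU_def using i by blast
  have aU: "?a \<in> UU j0" using v_in_UU by simp
  have aO: "?a \<in> orb (sgj j0) (v 1)" using aU IH(2) by simp
  have oa: "orb (sgj j0) ?a = UU j0" using orb_eq[OF fin bij_sgj v_in aO] IH(2) by simp
  have "card (orbs (sgj j0) P) \<le> card (orbs (\<lambda>x. sgj j0 (sw ?a ?b x)) P)"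
    using split_card[OF fin bij_sgj v_in w_in ab] bU oa by simp
  then have base: "card (orbs (sgj (Suc j0)) P) + Suc j0 \<ge> card (orbs sg P) + 1"
    using sgj_Suc IH(1) by simp
  have step: "card (orbs (sgj (Suc j0 + t)) P) + (Suc j0 + t) \<ge> card (orbs sg P) + 1" for t
  proof (induction t)
    case 0 then show ?case using base by simp
  next
    case (Suc t)
    let ?j = "Suc j0 + t"
    have "?j \<noteq> Suc ?j" by simp
    have ne2: "v (Suc ?j) \<noteq> w (Suc ?j) \<or> True" by simp
    have "card (orbs (sgj ?j) P) \<le> card (orbs (sgj (Suc ?j)) P) + 1"
    proof (cases "v (Suc ?j) = w (Suc ?j)")
      case True
      then have "sgj (Suc ?j) = sgj ?j" using sgj_Suc[of ?j] by (simp add: sw_def fun_eq_iff)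
      then show ?thesis by simp
    next
      case False
      have "card (orbs (sgj ?j) P) \<le> card (orbs (\<lambda>x. sgj ?j (sw (v (Suc ?j)) (w (Suc ?j)) x)) P) + 1"
        using step_card[OF fin bij_sgj v_in w_in False] .
      then show ?thesis unfolding sgj_Suc[of ?j, symmetric] .
    qed
    then show ?case using Suc.IH by simp
  qed
  have "Suc j0 + (k - Suc j0) = k" using jk jj by simp
  then show ?thesis using step[of "k - Suc j0"] by simp
qed

end


context bridge
begin

lemma genus_iff': "genus Q m < genus P m \<longleftrightarrow> card (orbs sg P) < card (orbs (sgj k) P) + k"
proof -
  have r: "real (card Q) = real (card P) - 2 * real k" using card_Q by (simp add: of_nat_diff)
  let ?X = "real (card P)" and ?a = "card (orbs sg P)" and ?b = "card (orbs (sgj k) P)"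
  have "((?X - 2 * real k) / 2 - real ?b + 1) / 2 < (?X / 2 - real ?a + 1) / 2 \<longleftrightarrow> real ?a < real ?b + real k"
    by (simp add: field_simps) linarith
  also have "\<dots> \<longleftrightarrow> ?a < ?b + k" by (simp only: of_nat_add[symmetric] of_nat_less_iff)
  finally show ?thesis unfolding genus_def c_eq c'_eq r .
qed

lemma passes_iff:
  assumes C: "C \<in> cycles P m"
  shows "passes m C (v i) \<longleftrightarrow> v (Suc i) \<in> C"
proof -
  obtain x0 where x0: "x0 \<in> P" "C = orb sg x0" using C unfolding cycles_orbs sg_def orbs_def by blast
  show ?thesis
  proof
    assume "passes m C (v i)"
    then obtain x where x: "x \<in> C" "m x = v i" unfolding passes_def by blast
    have "sg x \<in> C" using orb_app x(1) x0(2) by simp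
    moreover have "sg x = v (Suc i)" using sg_eq x(2) v_Suc by simp
    ultimately show "v (Suc i) \<in> C" by simp
  next
    assume h: "v (Suc i) \<in> C"
    have "orb sg (v (Suc i)) = C" using orb_eq[OF fin bij_sg x0(1)] h x0(2) by simp
    moreover have "w i \<in> orb sg (v (Suc i))" using w_in_Ob[of i] unfolding Ob_def .
    ultimately have "w i \<in> C" by simp
    then show "passes m C (v i)" unfolding passes_def using m_w by blast
  qed
qed

lemma rhs_iff:
  "(\<exists>C\<in>cycles P m. \<exists>i j. i \<le> k \<and> j \<le> k \<and> i \<noteq> j \<and> passes m C (v i) \<and> passes m C (v j))
    \<longleftrightarrow> \<not> D k"
proof
  assume "\<exists>C\<in>cycles P m. \<exists>i j. i \<le> k \<and> j \<le> k \<and> i \<noteq> j \<and> passes m C (v i) \<and> passes m C (v j)"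
  then obtain C i j where C: "C \<in> cycles P m" and ij: "i \<le> k" "j \<le> k" "i \<noteq> j"
    "passes m C (v i)" "passes m C (v j)" by blast
  have a: "v (Suc i) \<in> C" "v (Suc j) \<in> C" using passes_iff[OF C] ij by simp_all
  obtain x0 where x0: "x0 \<in> P" "C = orb sg x0" using C unfolding cycles_orbs sg_def orbs_def by blast
  have "Ob (Suc i) = C" unfolding Ob_def using orb_eq[OF fin bij_sg x0(1)] a(1) x0(2) by simp
  moreover have "Ob (Suc j) = C" unfolding Ob_def using orb_eq[OF fin bij_sg x0(1)] a(2) x0(2) by simp
  ultimately have "Ob (Suc i) = Ob (Suc j)" by simp
  moreover have "Ob (Suc i) \<noteq> Ob (Suc j)" if "D k" using D_elim[OF that, of "Suc i" "Suc j"] ij by simp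
  ultimately show "\<not> D k" by blast
next
  assume "\<not> D k"
  then obtain i1 i2 where ii: "1 \<le> i1" "i1 \<le> Suc k" "1 \<le> i2" "i2 \<le> Suc k" "i1 \<noteq> i2" "Ob i1 = Ob i2"
    unfolding D_def by blast
  have C: "Ob i1 \<in> cycles P m" unfolding cycles_orbs sg_def[symmetric] orbs_def Ob_def using v_in by blast
  have e1: "Suc (i1 - 1) = i1" "Suc (i2 - 1) = i2" using ii by simp_all
  have "v i1 \<in> Ob i1" unfolding Ob_def by (rule self_in_orb)
  then have p1: "passes m (Ob i1) (v (i1 - 1))" using passes_iff[OF C] e1 by simp
  have "v i2 \<in> Ob i2" unfolding Ob_def by (rule self_in_orb)
  then have "v i2 \<in> Ob i1" using ii(6) by simp
  then have p2: "passes m (Ob i1) (v (i2 - 1))" using passes_iff[OF C] e1 by simp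
  have "i1 - 1 \<le> k" "i2 - 1 \<le> k" "i1 - 1 \<noteq> i2 - 1" using ii by simp_all
  then show "\<exists>C\<in>cycles P m. \<exists>i j. i \<le> k \<and> j \<le> k \<and> i \<noteq> j \<and> passes m C (v i) \<and> passes m C (v j)"
    using C p1 p2 by blast
qed

lemma final:
  "genus Q m < genus P m \<longleftrightarrow>
    (\<exists>C\<in>cycles P m. \<exists>i j. i \<le> k \<and> j \<le> k \<and> i \<noteq> j \<and> passes m C (v i) \<and> passes m C (v j))"
proof (cases "D k")
  case True
  then have "card (orbs (sgj k) P) + k = card (orbs sg P)" using inv[of k] by simp
  then show ?thesis using genus_iff' rhs_iff True by simp
next
  case False
  then show ?thesis using genus_iff' rhs_iff notD by simp
qed

end

theorem mainTheorem7:
  fixes P :: "nat set" and m :: "nat \<Rightarrow> nat" and ini :: "nat \<Rightarrow> bool"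
    and p :: nat and k :: nat
  assumes "gauss P m ini"
    and "p \<in> P"
    and "k \<ge> 1"
    and "(\<forall>i\<in>{1..k}. ini ((nxt P ^^ i) p)) \<or> (\<forall>i\<in>{1..k}. \<not> ini ((nxt P ^^ i) p))"
  shows "genus P m > genus {q\<in>P. \<forall>i\<in>{1..k}. q \<noteq> (nxt P ^^ i) p \<and> m q \<noteq> (nxt P ^^ i) p} m
     \<longleftrightarrow> (\<exists>C\<in>cycles P m. \<exists>i j. i \<le> k \<and> j \<le> k \<and> i \<noteq> j \<and>
            passes m C ((nxt P ^^ i) p) \<and> passes m C ((nxt P ^^ j) p))"
proof -
  obtain c where br: "\<forall>i\<in>{1..k}. ini ((nxt P ^^ i) p) = c"
  proof (cases "\<forall>i\<in>{1..k}. ini ((nxt P ^^ i) p)")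
    case True then show ?thesis using that[of True] by simp
  next
    case False
    then have "\<forall>i\<in>{1..k}. \<not> ini ((nxt P ^^ i) p)" using assms(4) by blast
    then show ?thesis using that[of False] by simp
  qed
  interpret bridge P m ini p k c using assms(1-3) br by unfold_locales
  show ?thesis using final unfolding Q_def v_def by simp
qed

end
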